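(* Let $G=(V,E)$ be a $k$-uniform cored hypergraph ($k\ge3$) and let $\mathbf x\in\mathbb R^n$ be an H-eigenvector of its Laplacian tensor $\mathcal L$ corresponding to an H-eigenvalue $\lambda\neq1$. If $i,j$ are two cored vertices lying in a common edge $e\in E$, then $|x_i|=|x_j|$; moreover $x_i=x_j$ when $k$ is odd.
   Context: A $k$-uniform hypergraph $G=(V,E)$ has $V=[n]$ and a nonempty set $E$ of $k$-element subsets of $V$; $d_i$ is the number of edges containing $i$. A cored vertex is a vertex of degree one; $G$ is cored if every edge contains a cored vertex. The Laplacian tensor $\mathcal L=\mathcal D-\mathcal A$ ($\mathcal D$ diagonal with entries $d_i$, $\mathcal A$ with entries $\frac1{(k-1)!}$ at index tuples forming an edge and $0$ otherwise) satisfies $(\mathcal L\mathbf x^{k-1})_i=d_ix_i^{k-1}-\sum_{e\in E,\,i\in e}\prod_{s\in e\setminus\{i\}}x_s$. A real $\lambda$ is an H-eigenvalue with H-eigenvector $\mathbf x\neq0$ if $(\mathcal L\mathbf x^{k-1})_i=\lambda x_i^{k-1}$ for all $i$. *)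

theory Defs
  imports "HOL-Analysis.Analysis"
begin

definition uniform_hypergraph :: "nat \<Rightarrow> nat \<Rightarrow> nat set set \<Rightarrow> bool" where
  "uniform_hypergraph n k E \<longleftrightarrow> E \<noteq> {} \<and> (\<forall>e\<in>E. e \<subseteq> {1..n} \<and> card e = k)"

definition hdegree :: "nat set set \<Rightarrow> nat \<Rightarrow> nat" where
  "hdegree E i = card {e\<in>E. i \<in> e}"

definition cored_vertex :: "nat set set \<Rightarrow> nat \<Rightarrow> bool" where
  "cored_vertex E i \<longleftrightarrow> hdegree E i = 1"

definition cored :: "nat set set \<Rightarrow> bool" where
  "cored E \<longleftrightarrow> (\<forall>e\<in>E. \<exists>i\<in>e. cored_vertex E i)"

text \<open>The i-th component of L x^(k-1) for the Laplacian tensor L = D - A.\<close>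
definition laplacian_apply :: "nat set set \<Rightarrow> nat \<Rightarrow> (nat \<Rightarrow> real) \<Rightarrow> nat \<Rightarrow> real" where
  "laplacian_apply E k x i =
     real (hdegree E i) * x i ^ (k - 1) - (\<Sum>e\<in>{e\<in>E. i \<in> e}. \<Prod>s\<in>e - {i}. x s)"

definition H_eigenpair :: "nat \<Rightarrow> nat \<Rightarrow> nat set set \<Rightarrow> real \<Rightarrow> (nat \<Rightarrow> real) \<Rightarrow> bool" where
  "H_eigenpair n k E lam x \<longleftrightarrow>
     (\<exists>i\<in>{1..n}. x i \<noteq> 0) \<and>
     (\<forall>i\<in>{1..n}. laplacian_apply E k x i = lam * x i ^ (k - 1))"

end

theory Submission
  imports Defs
begin

lemma key:
  assumes "uniform_hypergraph n k E" and "k \<ge> 3"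
    and "H_eigenpair n k E lam x"
    and "e \<in> E" and "i \<in> e" and "cored_vertex E i"
  shows "(1 - lam) * x i ^ k = (\<Prod>s\<in>e. x s)"
proof -
  have fin: "finite e" using assms(1,2,4) unfolding uniform_hypergraph_def
    by (metis card.infinite not_numeral_le_zero)
  have ein: "i \<in> {1..n}" using assms(1,4,5) unfolding uniform_hypergraph_def by blast
  have c: "card {e\<in>E. i \<in> e} = 1" using assms(6) unfolding cored_vertex_def hdegree_def .
  then obtain f where f: "{e\<in>E. i \<in> e} = {f}" using card_1_singletonE by blast
  have fe: "f = e" using f assms(4,5) by blast
  have "laplacian_apply E k x i = lam * x i ^ (k - 1)"
    using assms(3) ein unfolding H_eigenpair_def by blast
  hence eq: "x i ^ (k-1) - (\<Prod>s\<in>e - {i}. x s) = lam * x i ^ (k - 1)"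
    unfolding laplacian_apply_def hdegree_def c f fe by simp
  have "(\<Prod>s\<in>e. x s) = x i * (\<Prod>s\<in>e - {i}. x s)"
    using fin assms(5) by (simp add: prod.remove)
  also have "\<dots> = x i * ((1 - lam) * x i ^ (k-1))"
  proof -
    have "(\<Prod>s\<in>e - {i}. x s) = (1 - lam) * x i ^ (k-1)" using eq by (simp add: algebra_simps)
    thus ?thesis by simp
  qed
  also have "\<dots> = (1 - lam) * (x i * x i ^ (k-1))" by simp
  also have "x i * x i ^ (k-1) = x i ^ k" using assms(2)
    by (metis One_nat_def Suc_pred le_zero_eq not_gr0 numeral_3_eq_3 power_Suc zero_neq_numeral Suc_leD)
  finally show ?thesis by simp
qed

theorem lemma3p1:
  fixes n k :: nat and E :: "nat set set" and x :: "nat \<Rightarrow> real" and lam :: real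
    and i j :: nat and e :: "nat set"
  assumes "uniform_hypergraph n k E" and "cored E" and "k \<ge> 3"
    and "H_eigenpair n k E lam x" and "lam \<noteq> 1"
    and "e \<in> E" and "i \<in> e" and "j \<in> e"
    and "cored_vertex E i" and "cored_vertex E j"
  shows "\<bar>x i\<bar> = \<bar>x j\<bar> \<and> (odd k \<longrightarrow> x i = x j)"
proof -
  have "(1 - lam) * x i ^ k = (1 - lam) * x j ^ k"
    using key[OF assms(1,3,4,6,7,9)] key[OF assms(1,3,4,6,8,10)] by simp
  hence pk: "x i ^ k = x j ^ k" using assms(5) by simp
  hence "\<bar>x i\<bar> ^ k = \<bar>x j\<bar> ^ k" by (metis power_abs)
  hence a: "\<bar>x i\<bar> = \<bar>x j\<bar>" using assms(3)
    by (metis abs_ge_zero power_eq_imp_eq_base not_numeral_le_zero gr0I)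
  moreover have "odd k \<longrightarrow> x i = x j"
  proof
    assume o: "odd k"
    show "x i = x j"
    proof (cases "x i = x j")
      case False
      hence "x i = - x j" using a by (metis abs_eq_iff abs_minus_cancel)
      hence "x i ^ k = - (x j ^ k)" using o by (simp add: power_minus_odd)
      hence "x j = 0" using pk assms(3) by simp
      thus ?thesis using \<open>x i = - x j\<close> by simp
    qed
  qed
  ultimately show ?thesis by blast
qed

end
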